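(* For a biconnected $K_4$-minor-free graph $G$, the following statements are equivalent: (1) For some $v\in V(G)$, $G$ has a $1$-perfect orientation in which $v$ is a sink. (2) For every $v\in V(G)$, $G$ has a $1$-perfect orientation in which $v$ is a sink. (3) $G$ is chordal. (4) $G$ is either $K_1$ or a $2$-tree.
   Context: A graph is biconnected if it is connected and has no cut vertex. An orientation of $G$ is $1$-perfect if for every vertex the out-neighborhood is a clique in $G$. A sink is a vertex of out-degree $0$. A graph is chordal if it has no induced cycle of length at least $4$. $2$-trees: $K_2$ is a $2$-tree, and adding to a $2$-tree a new vertex adjacent to exactly two adjacent vertices yields a $2$-tree; there are no others. *)

theory Defs
  imports Main
begin

definition graph :: "'a set \<Rightarrow> 'a set set \<Rightarrow> bool" where
  "graph V E \<longleftrightarrow> finite V \<and> (\<forall>e\<in>E. \<exists>u v. u \<noteq> v \<and> u \<in> V \<and> v \<in> V \<and> e = {u, v})"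

definition reach_in :: "'a set set \<Rightarrow> 'a set \<Rightarrow> 'a \<Rightarrow> 'a \<Rightarrow> bool" where
  "reach_in E S u v \<longleftrightarrow> (\<lambda>x y. x \<in> S \<and> y \<in> S \<and> {x, y} \<in> E)\<^sup>*\<^sup>* u v"

definition connected_in :: "'a set set \<Rightarrow> 'a set \<Rightarrow> bool" where
  "connected_in E S \<longleftrightarrow> S \<noteq> {} \<and> (\<forall>u\<in>S. \<forall>v\<in>S. reach_in E S u v)"

definition cut_vertex :: "'a set \<Rightarrow> 'a set set \<Rightarrow> 'a \<Rightarrow> bool" where
  "cut_vertex V E v \<longleftrightarrow> v \<in> V \<and>
     (\<exists>u\<in>V - {v}. \<exists>w\<in>V - {v}. \<not> reach_in E (V - {v}) u w)"

definition biconnected :: "'a set \<Rightarrow> 'a set set \<Rightarrow> bool" where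
  "biconnected V E \<longleftrightarrow> connected_in E V \<and> \<not> (\<exists>v. cut_vertex V E v)"

definition has_K4_minor :: "'a set \<Rightarrow> 'a set set \<Rightarrow> bool" where
  "has_K4_minor V E \<longleftrightarrow> (\<exists>B :: nat \<Rightarrow> 'a set.
     (\<forall>i<4. B i \<subseteq> V \<and> connected_in E (B i)) \<and>
     (\<forall>i<4. \<forall>j<4. i \<noteq> j \<longrightarrow> B i \<inter> B j = {} \<and>
        (\<exists>x\<in>B i. \<exists>y\<in>B j. {x, y} \<in> E)))"

text \<open>An orientation: D x y means the edge {x,y} is oriented from x to y.\<close>
definition orientation :: "'a set \<Rightarrow> 'a set set \<Rightarrow> ('a \<Rightarrow> 'a \<Rightarrow> bool) \<Rightarrow> bool" where
  "orientation V E D \<longleftrightarrow>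
     (\<forall>x y. D x y \<longrightarrow> {x, y} \<in> E) \<and>
     (\<forall>x y. {x, y} \<in> E \<longrightarrow> (D x y \<longleftrightarrow> \<not> D y x))"

definition one_perfect_orientation :: "'a set \<Rightarrow> 'a set set \<Rightarrow> ('a \<Rightarrow> 'a \<Rightarrow> bool) \<Rightarrow> bool" where
  "one_perfect_orientation V E D \<longleftrightarrow> orientation V E D \<and>
     (\<forall>v\<in>V. \<forall>x y. D v x \<and> D v y \<and> x \<noteq> y \<longrightarrow> {x, y} \<in> E)"

definition sink :: "('a \<Rightarrow> 'a \<Rightarrow> bool) \<Rightarrow> 'a \<Rightarrow> bool" where
  "sink D v \<longleftrightarrow> (\<forall>x. \<not> D v x)"

definition induced_cycle :: "'a set \<Rightarrow> 'a set set \<Rightarrow> 'a list \<Rightarrow> bool" where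
  "induced_cycle V E cs \<longleftrightarrow> length cs \<ge> 3 \<and> distinct cs \<and> set cs \<subseteq> V \<and>
     (\<forall>i<length cs. \<forall>j<length cs.
        {cs ! i, cs ! j} \<in> E \<longleftrightarrow> (j = Suc i mod length cs \<or> i = Suc j mod length cs))"

definition chordal :: "'a set \<Rightarrow> 'a set set \<Rightarrow> bool" where
  "chordal V E \<longleftrightarrow> \<not> (\<exists>cs. induced_cycle V E cs \<and> length cs \<ge> 4)"

inductive two_tree :: "'a set \<Rightarrow> 'a set set \<Rightarrow> bool" where
  base: "a \<noteq> b \<Longrightarrow> two_tree {a, b} {{a, b}}"
| step: "two_tree V E \<Longrightarrow> {x, y} \<in> E \<Longrightarrow> z \<notin> V \<Longrightarrow>
           two_tree (insert z V) (E \<union> {{z, x}, {z, y}})"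

definition is_K1 :: "'a set \<Rightarrow> 'a set set \<Rightarrow> bool" where
  "is_K1 V E \<longleftrightarrow> (\<exists>v. V = {v}) \<and> E = {}"

end

theory Submission
  imports Defs
begin


lemma reach_in_refl[simp]: "reach_in E S u u"
  unfolding reach_in_def by simp

lemma reach_in_step: "x \<in> S \<Longrightarrow> y \<in> S \<Longrightarrow> {x,y} \<in> E \<Longrightarrow> reach_in E S x y"
  unfolding reach_in_def by auto

lemma reach_in_trans: "reach_in E S u v \<Longrightarrow> reach_in E S v w \<Longrightarrow> reach_in E S u w"
  unfolding reach_in_def by (rule rtranclp_trans)

lemma reach_in_mono: "reach_in E S u w \<Longrightarrow> S \<subseteq> T \<Longrightarrow> reach_in E T u w"
  unfolding reach_in_def
  by (erule rtranclp_mono[THEN predicate2D, rotated]) auto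

lemma reach_in_sym: "reach_in E S u w \<Longrightarrow> reach_in E S w u"
  unfolding reach_in_def
proof (induction rule: rtranclp_induct)
  case base then show ?case by simp
next
  case (step y z)
  then have "z \<in> S \<and> y \<in> S \<and> {z,y} \<in> E" by (auto simp: insert_commute)
  then show ?case using step(3) by (rule converse_rtranclp_into_rtranclp)
qed

lemma reach_in_first: "reach_in E S u w \<Longrightarrow> u \<noteq> w \<Longrightarrow> u \<in> S \<and> (\<exists>x\<in>S. {u,x} \<in> E)"
  unfolding reach_in_def by (erule converse_rtranclpE) auto

lemma reach_in_cong: "z \<notin> S \<Longrightarrow> reach_in {e\<in>E. z \<notin> e} S = reach_in E S"
proof -
  assume z: "z \<notin> S"
  have "(\<lambda>x y. x \<in> S \<and> y \<in> S \<and> {x, y} \<in> {e\<in>E. z \<notin> e}) = (\<lambda>x y. x \<in> S \<and> y \<in> S \<and> {x, y} \<in> E)"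
    using z by (auto intro!: ext)
  then show ?thesis unfolding reach_in_def[abs_def] by simp
qed

lemma reach_in_remove_simp:
  assumes zS: "z \<in> S" and simp: "\<forall>x\<in>S. \<forall>y\<in>S. {z,x} \<in> E \<and> {z,y} \<in> E \<and> x \<noteq> y \<longrightarrow> {x,y} \<in> E"
    and r: "reach_in E S u w" and nl: "{z} \<notin> E" and "u \<noteq> z" and "w \<noteq> z"
  shows "reach_in E (S - {z}) u w"
proof -
  have "(w \<noteq> z \<longrightarrow> reach_in E (S - {z}) u w) \<and> (w = z \<longrightarrow> (\<exists>p. p \<in> S - {z} \<and> {z,p} \<in> E \<and> reach_in E (S - {z}) u p))"
    using r unfolding reach_in_def[of E S]
  proof (induction rule: rtranclp_induct)
    case base then show ?case using \<open>u \<noteq> z\<close> by (simp add: reach_in_def)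
  next
    case (step y t)
    show ?case
    proof (cases "y = z")
      case True
      then obtain p where p: "p \<in> S - {z}" "{z,p} \<in> E" "reach_in E (S - {z}) u p" using step by auto
      have tz: "t \<noteq> z" using step(2) True nl by auto
      have "reach_in E (S - {z}) u t"
      proof (cases "p = t")
        case True then show ?thesis using p by simp
      next
        case False
        have "{p,t} \<in> E" using simp p step(2) True False by auto
        then have "reach_in E (S - {z}) p t" using p step(2) tz by (intro reach_in_step) auto
        then show ?thesis using p reach_in_trans by metis
      qed
      then show ?thesis using tz by simp
    next
      case False
      then have ry: "reach_in E (S - {z}) u y" using step by auto
      show ?thesis
      proof (cases "t = z")
        case True then show ?thesis using ry step(2) False by (auto simp: insert_commute)
      next
        case False
        then have "reach_in E (S - {z}) y t" using step(2) \<open>y \<noteq> z\<close> by (intro reach_in_step) auto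
        then show ?thesis using ry False reach_in_trans by metis
      qed
    qed
  qed
  then show ?thesis using \<open>w \<noteq> z\<close> by simp
qed



definition walk :: "('a \<Rightarrow> 'a \<Rightarrow> bool) \<Rightarrow> 'a list \<Rightarrow> bool" where
  "walk R ps \<longleftrightarrow> ps \<noteq> [] \<and> (\<forall>i. Suc i < length ps \<longrightarrow> R (ps!i) (ps!Suc i))"

definition nochord :: "('a \<Rightarrow> 'a \<Rightarrow> bool) \<Rightarrow> 'a list \<Rightarrow> bool" where
  "nochord R ps \<longleftrightarrow> (\<forall>i j. Suc i < j \<and> j < length ps \<longrightarrow> \<not> R (ps!i) (ps!j))"

lemma walk_exists: "R\<^sup>*\<^sup>* x y \<Longrightarrow> \<exists>ps. walk R ps \<and> hd ps = x \<and> last ps = y"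
proof (induction rule: rtranclp_induct)
  case base then show ?case by (intro exI[of _ "[x]"]) (simp add: walk_def)
next
  case (step y z)
  then obtain ps where ps: "walk R ps" "hd ps = x" "last ps = y" by auto
  have "walk R (ps @ [z])" unfolding walk_def
  proof (intro conjI allI impI)
    fix i assume i: "Suc i < length (ps @ [z])"
    show "R ((ps @ [z]) ! i) ((ps @ [z]) ! Suc i)"
    proof (cases "Suc i < length ps")
      case True then show ?thesis using ps(1) by (simp add: walk_def nth_append)
    next
      case False
      then have "Suc i = length ps" using i by simp
      then have "ps ! i = last ps" using ps(1) by (metis diff_Suc_1 last_conv_nth walk_def)
      then show ?thesis using \<open>Suc i = length ps\<close> ps step(2) by (simp add: nth_append)
    qed
  qed simp
  moreover have "hd (ps @ [z]) = x" using ps by (simp add: walk_def)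
  ultimately show ?case by (intro exI[of _ "ps @ [z]"]) simp
qed

lemma walk_shortcut:
  assumes w: "walk R ps" and mj: "m \<le> j" "j < length ps" and c: "m = 0 \<or> R (ps!(m-1)) (ps!j)"
  shows "walk R (take m ps @ drop j ps)"
  unfolding walk_def
proof (intro conjI allI impI)
  show "take m ps @ drop j ps \<noteq> []" using mj by simp
  fix k assume k: "Suc k < length (take m ps @ drop j ps)"
  have lt: "length (take m ps) = m" using mj by simp
  show "R ((take m ps @ drop j ps) ! k) ((take m ps @ drop j ps) ! Suc k)"
  proof (cases "Suc k < m")
    case True then show ?thesis using w mj by (simp add: nth_append walk_def)
  next
    case False
    show ?thesis
    proof (cases "Suc k = m")
      case True
      then show ?thesis using c mj by (auto simp: nth_append)
    next
      case False
      then have km: "m \<le> k" using \<open>\<not> Suc k < m\<close> by simp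
      have e1: "(take m ps @ drop j ps) ! k = ps ! (j + (k - m))" using km lt mj by (simp add: nth_append)
      have e2: "(take m ps @ drop j ps) ! Suc k = ps ! Suc (j + (k - m))" using km lt mj
        by (simp add: nth_append Suc_diff_le)
      have "Suc (j + (k - m)) < length ps" using k km mj by simp
      then show ?thesis unfolding e1 e2 using w by (simp add: walk_def)
    qed
  qed
qed

lemma shortest_walk:
  assumes "R\<^sup>*\<^sup>* x y"
  shows "\<exists>ps. walk R ps \<and> hd ps = x \<and> last ps = y \<and> distinct ps \<and> nochord R ps"
proof -
  let ?P = "\<lambda>ps. walk R ps \<and> hd ps = x \<and> last ps = y"
  obtain ps0 where "?P ps0" using walk_exists[OF assms] by auto
  then obtain ps where P: "?P ps" and min: "\<And>qs. ?P qs \<Longrightarrow> length ps \<le> length qs"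
    using ex_has_least_nat[of ?P ps0 length] by blast
  have ne: "ps \<noteq> []" using P by (simp add: walk_def)
  have hd_last: "hd (take m ps @ drop j ps) = x \<and> last (take m ps @ drop j ps) = y"
    if "m \<le> j" "j < length ps" "m = 0 \<longrightarrow> ps ! j = x" for m j
  proof
    show "last (take m ps @ drop j ps) = y" using that P by (simp add: last_append)
    show "hd (take m ps @ drop j ps) = x"
    proof (cases m)
      case 0 then show ?thesis using that by (simp add: hd_drop_conv_nth)
    next
      case (Suc m') then show ?thesis using that P ne by (simp add: hd_append hd_take)
    qed
  qed
  have dist: "distinct ps"
  proof (rule ccontr)
    assume "\<not> distinct ps"
    then obtain i j where ij: "i < j" "j < length ps" "ps ! i = ps ! j"
      by (metis distinct_conv_nth linorder_neqE_nat)
    have c: "i = 0 \<or> R (ps!(i-1)) (ps!j)"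
    proof (cases i)
      case (Suc i') then show ?thesis using P ij unfolding walk_def by (metis Suc_lessD diff_Suc_1 less_trans_Suc)
    qed simp
    have "?P (take i ps @ drop j ps)"
    proof -
      have "i = 0 \<longrightarrow> ps ! j = x" using P ij ne by (auto simp: hd_conv_nth)
      then show ?thesis using walk_shortcut[of R ps i j, OF _ _ _ c] P ij hd_last[of i j] by simp
    qed
    then have "length ps \<le> length (take i ps @ drop j ps)" by (rule min)
    then show False using ij by simp
  qed
  have nc: "nochord R ps" unfolding nochord_def
  proof (intro allI impI notI)
    fix i j assume ij: "Suc i < j \<and> j < length ps" and r: "R (ps ! i) (ps ! j)"
    have "?P (take (Suc i) ps @ drop j ps)"
      using walk_shortcut[of R ps "Suc i" j] P ij r hd_last[of "Suc i" j] by simp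
    then have "length ps \<le> length (take (Suc i) ps @ drop j ps)" by (rule min)
    then show False using ij by (simp add: min_def split: if_splits; arith)
  qed
  show ?thesis using P dist nc by blast
qed



lemma graph_noloop: "graph V E \<Longrightarrow> {x} \<notin> E"
  unfolding graph_def by (metis doubleton_eq_iff insert_absorb2)

lemma graph_edge: "graph V E \<Longrightarrow> {x,y} \<in> E \<Longrightarrow> x \<in> V \<and> y \<in> V \<and> x \<noteq> y"
  unfolding graph_def by (metis doubleton_eq_iff insert_absorb2)

lemma cycle_from_path:
  assumes g: "graph V E" and w: "walk (\<lambda>x y. {x,y}\<in>E) ps" and d: "distinct ps"
    and nc: "\<forall>i j. Suc i < j \<and> j < length ps \<longrightarrow> {ps!i, ps!j} \<notin> E"
    and len: "length ps \<ge> 3" and a: "a \<notin> set ps" and ah: "{a, ps!0} \<in> E"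
    and al: "{a, ps!(length ps - 1)} \<in> E"
    and inner: "\<forall>k. 0 < k \<and> Suc k < length ps \<longrightarrow> {a, ps!k} \<notin> E"
    and sub: "set ps \<subseteq> V" "a \<in> V"
  shows "induced_cycle V E (ps @ [a])"
proof -
  let ?n = "length ps"
  have pp: "{ps!i, ps!j} \<in> E \<longleftrightarrow> (j = Suc i \<or> i = Suc j)" if "i < ?n" "j < ?n" for i j
  proof -
    consider "i = j" | "j = Suc i" | "i = Suc j" | "Suc i < j" | "Suc j < i" by linarith
    then show ?thesis
    proof cases
      case 1 then show ?thesis using graph_noloop[OF g] by simp
    next
      case 2 then show ?thesis using w that by (simp add: walk_def)
    next
      case 3 then show ?thesis using w that by (simp add: walk_def insert_commute)
    next
      case 4 then show ?thesis using nc that by auto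
    next
      case 5 then show ?thesis using nc[rule_format, of j i] that by (auto simp: insert_commute)
    qed
  qed
  have nth: "(ps @ [a]) ! i = (if i < ?n then ps ! i else a)" if "i \<le> ?n" for i
    using that by (auto simp: nth_append)
  have pa: "{ps!i, a} \<in> E \<longleftrightarrow> (i = 0 \<or> Suc i = ?n)" if iL: "i < ?n" for i
  proof -
    consider "i = 0" | "Suc i = ?n" | "0 < i \<and> Suc i < ?n" using iL by linarith
    then show ?thesis
    proof cases
      case 1 then show ?thesis using ah by (simp add: insert_commute)
    next
      case 2 then have "i = ?n - 1" by simp
      then show ?thesis using al iL by (auto simp: insert_commute)
    next
      case 3 then show ?thesis using inner len by (auto simp: insert_commute)
    qed
  qed
  show ?thesis unfolding induced_cycle_def
  proof (intro conjI allI impI)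
    show "3 \<le> length (ps @ [a])" using len by simp
    show "distinct (ps @ [a])" using d a by simp
    show "set (ps @ [a]) \<subseteq> V" using sub by simp
  next
    fix i j assume i: "i < length (ps @ [a])" and j: "j < length (ps @ [a])"
    then have i': "i \<le> ?n" and j': "j \<le> ?n" by auto
    show "{(ps @ [a]) ! i, (ps @ [a]) ! j} \<in> E \<longleftrightarrow>
          (j = Suc i mod length (ps @ [a]) \<or> i = Suc j mod length (ps @ [a]))"
    proof (cases "i < ?n")
      case True
      note it = True
      show ?thesis
      proof (cases "j < ?n")
        case True
        then show ?thesis using it pp[of i j] nth[OF i'] nth[OF j'] by simp
      next
        case False
        then have "j = ?n" using j' by simp
        then show ?thesis using it pa[of i] nth[OF i'] nth[OF j'] len by auto
      qed
    next
      case False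
      then have iN: "i = ?n" using i' by simp
      show ?thesis
      proof (cases "j < ?n")
        case True
        then show ?thesis using iN pa[of j] nth[OF i'] nth[OF j'] len by (auto simp: insert_commute)
      next
        case False
        then have "j = ?n" using j' by simp
        then show ?thesis using iN nth[OF i'] graph_noloop[OF g] len by auto
      qed
    qed
  qed
qed

lemma K4_of_clique:
  assumes "p \<in> V" "q \<in> V" "r \<in> V" "s \<in> V"
    and "p \<noteq> q" "p \<noteq> r" "p \<noteq> s" "q \<noteq> r" "q \<noteq> s" "r \<noteq> s"
    and "{p,q} \<in> E" "{p,r} \<in> E" "{p,s} \<in> E" "{q,r} \<in> E" "{q,s} \<in> E" "{r,s} \<in> E"
  shows "has_K4_minor V E"
proof -
  define B :: "nat \<Rightarrow> _" where "B i = (if i = 0 then {p} else if i = 1 then {q} else if i = 2 then {r} else {s})" for i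
  have c: "connected_in E {x}" for x unfolding connected_in_def by simp
  have four: "i < 4 \<Longrightarrow> i = 0 \<or> i = 1 \<or> i = 2 \<or> i = 3" for i :: nat by linarith
  show ?thesis unfolding has_K4_minor_def
  proof (intro exI[of _ B] conjI allI impI)
    fix i :: nat assume "i < 4"
    then show "B i \<subseteq> V" "connected_in E (B i)" using assms c by (auto simp: B_def)
  next
    fix i j :: nat assume "i < 4" "j < 4" "i \<noteq> j"
    then show "B i \<inter> B j = {}" "\<exists>x\<in>B i. \<exists>y\<in>B j. {x, y} \<in> E"
      using four[of i] four[of j] assms by (auto simp: B_def insert_commute)
  qed
qed



lemma reach_component:
  assumes a: "reach_in E U v x"
  shows "reach_in E {y\<in>U. reach_in E U v y} v x"
proof -
  define K where "K = {y\<in>U. reach_in E U v y}"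
  have "(\<lambda>x y. x \<in> U \<and> y \<in> U \<and> {x, y} \<in> E)\<^sup>*\<^sup>* v x" using a unfolding reach_in_def .
  then have "reach_in E K v x"
  proof (induction rule: rtranclp_induct)
    case base then show ?case by simp
  next
    case (step y z)
    have rz: "reach_in E U v z" using step(1,2) unfolding reach_in_def by (rule rtranclp.rtrancl_into_rtrancl)
    have ry: "reach_in E U v y" using step(1) unfolding reach_in_def .
    have "reach_in E K y z"
      apply (rule reach_in_step)
      using step(2) ry rz unfolding K_def by simp_all
    then show ?case using step(3) by (rule reach_in_trans[rotated])
  qed
  then show ?thesis unfolding K_def .
qed

lemma walk_mono: "walk R ps \<Longrightarrow> (\<And>x y. R x y \<Longrightarrow> Q x y) \<Longrightarrow> walk Q ps"
  unfolding walk_def by auto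

lemma walk_set:
  assumes "walk R ps" "2 \<le> length ps" "\<And>x y. R x y \<Longrightarrow> P x \<and> P y"
  shows "\<forall>x\<in>set ps. P x"
proof
  fix x assume "x \<in> set ps"
  then obtain k where k: "k < length ps" "x = ps ! k" by (auto simp: in_set_conv_nth)
  show "P x"
  proof (cases "Suc k < length ps")
    case True
    then have "R (ps ! k) (ps ! Suc k)" using assms(1) unfolding walk_def by blast
    then show ?thesis using assms(3) k by blast
  next
    case False
    then obtain j where j: "k = Suc j" using k assms(2) by (cases k) auto
    then have "R (ps ! j) (ps ! Suc j)" using assms(1) k unfolding walk_def by blast
    then show ?thesis using assms(3) k j by blast
  qed
qed

definition simp_in :: "'a set set \<Rightarrow> 'a set \<Rightarrow> 'a \<Rightarrow> bool" where
  "simp_in E W z \<longleftrightarrow> (\<forall>x\<in>W. \<forall>y\<in>W. {z,x} \<in> E \<and> {z,y} \<in> E \<and> x \<noteq> y \<longrightarrow> {x,y} \<in> E)"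

lemma dirac:
  assumes g: "graph V E" and ch: "chordal V E"
  shows "W \<subseteq> V \<Longrightarrow> (\<forall>x\<in>W. \<forall>y\<in>W. x \<noteq> y \<longrightarrow> {x,y} \<in> E) \<or>
     (\<exists>z1\<in>W. \<exists>z2\<in>W. z1 \<noteq> z2 \<and> {z1,z2} \<notin> E \<and> simp_in E W z1 \<and> simp_in E W z2)"
proof (induction "card W" arbitrary: W rule: less_induct)
  case less
  have finW: "finite W" using less(2) g finite_subset unfolding graph_def by blast
  show ?case
  proof (cases "\<forall>x\<in>W. \<forall>y\<in>W. x \<noteq> y \<longrightarrow> {x,y} \<in> E")
    case True then show ?thesis by simp
  next
    case False
    then obtain a b where ab: "a \<in> W" "b \<in> W" "a \<noteq> b" "{a,b} \<notin> E" by auto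
    define Na where "Na = insert a {x\<in>W. {a,x} \<in> E}"
    define U where "U = W - Na"
    define C where "C = {x\<in>U. reach_in E U b x}"
    define S where "S = {s\<in>W - C. \<exists>c\<in>C. {s,c} \<in> E}"
    have bC: "b \<in> C" using ab unfolding C_def U_def Na_def by simp
    have CW: "C \<subseteq> W" unfolding C_def U_def by auto
    have aC: "{a,c} \<notin> E \<and> c \<noteq> a" if "c \<in> C" for c using that unfolding C_def U_def Na_def by auto
    have nbrC: "x \<in> C \<or> x \<in> S" if "c \<in> C" "x \<in> W" "{c,x} \<in> E" for c x
      using that unfolding S_def by (auto simp: insert_commute)
    have SN: "{a,s} \<in> E \<and> s \<noteq> a \<and> s \<in> W" if sS: "s \<in> S" for s
    proof -
      obtain c where c: "c \<in> C" "{s,c} \<in> E" "s \<in> W" "s \<notin> C" using sS unfolding S_def by auto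
      have "s \<notin> U"
      proof
        assume sU: "s \<in> U"
        have "reach_in E U b c" "c \<in> U" using c unfolding C_def by auto
        moreover have "reach_in E U c s" using sU \<open>c \<in> U\<close> c(2) by (intro reach_in_step) (auto simp: insert_commute)
        ultimately have "reach_in E U b s" using reach_in_trans by metis
        then show False using sU c(4) unfolding C_def by simp
      qed
      then have "s \<in> Na" using c unfolding U_def by simp
      moreover have "s \<noteq> a" using aC[OF c(1)] c(2) by auto
      ultimately show ?thesis using c unfolding Na_def by auto
    qed
    have reachC: "reach_in E C b c" if "c \<in> C" for c
      using reach_component[of E U b c] that unfolding C_def by simp
    have clique: "{s1,s2} \<in> E" if s: "s1 \<in> S" "s2 \<in> S" "s1 \<noteq> s2" for s1 s2
    proof (rule ccontr)
      assume nadj: "{s1,s2} \<notin> E"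
      obtain c1 where c1: "c1 \<in> C" "{s1,c1} \<in> E" using s unfolding S_def by auto
      obtain c2 where c2: "c2 \<in> C" "{s2,c2} \<in> E" using s unfolding S_def by auto
      define X where "X = C \<union> {s1,s2}"
      have CX: "C \<subseteq> X" unfolding X_def by blast
      have r1: "reach_in E X s1 c1" using c1 unfolding X_def by (intro reach_in_step) auto
      have r2: "reach_in E X c1 b" by (rule reach_in_mono[OF reach_in_sym[OF reachC[OF c1(1)]] CX])
      have r3: "reach_in E X b c2" by (rule reach_in_mono[OF reachC[OF c2(1)] CX])
      have r4: "reach_in E X c2 s2" using c2 unfolding X_def by (intro reach_in_step) (auto simp: insert_commute)
      have "reach_in E X s1 s2" by (rule reach_in_trans[OF r1 reach_in_trans[OF r2 reach_in_trans[OF r3 r4]]])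
      from shortest_walk[OF this[unfolded reach_in_def]]
      obtain ps where ps: "walk (\<lambda>x y. x \<in> X \<and> y \<in> X \<and> {x,y} \<in> E) ps" "hd ps = s1" "last ps = s2"
        "distinct ps" "nochord (\<lambda>x y. x \<in> X \<and> y \<in> X \<and> {x,y} \<in> E) ps"
        by blast
      have ne: "ps \<noteq> []" using ps(1) by (simp add: walk_def)
      have h0: "ps ! 0 = s1" using ps(2) ne by (simp add: hd_conv_nth)
      have hl: "ps ! (length ps - 1) = s2" using ps(3) ne by (simp add: last_conv_nth)
      have l2: "2 \<le> length ps"
      proof (rule ccontr)
        assume "\<not> 2 \<le> length ps"
        then have "length ps = 1" using ne by (cases ps) (auto simp: not_le)
        then show False using h0 hl s by simp
      qed
      have l3: "3 \<le> length ps"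
      proof (rule ccontr)
        assume "\<not> 3 \<le> length ps"
        then have "length ps = 2" using l2 by simp
        then have "{ps!0, ps!1} \<in> E" using ps(1) unfolding walk_def by auto
        then show False using h0 hl nadj \<open>length ps = 2\<close> by simp
      qed
      have setX: "\<forall>x\<in>set ps. x \<in> X" using walk_set[OF ps(1) l2, of "\<lambda>x. x \<in> X"] by blast
      have aX: "a \<notin> X"
      proof
        assume "a \<in> X"
        then consider "a \<in> C" | "a = s1" | "a = s2" unfolding X_def by blast
        then show False using aC SN[OF s(1)] SN[OF s(2)] by cases blast+
      qed
      have XV: "X \<subseteq> V" using less(2) CW SN[OF s(1)] SN[OF s(2)] unfolding X_def by blast
      have sV: "set ps \<subseteq> V" using setX XV by blast
      have inner: "\<forall>k. 0 < k \<and> Suc k < length ps \<longrightarrow> {a, ps!k} \<notin> E"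
      proof (intro allI impI)
        fix k assume k: "0 < k \<and> Suc k < length ps"
        have "ps ! k \<noteq> ps ! 0" using nth_eq_iff_index_eq[OF ps(4), of k 0] k ne by simp
        moreover have "ps ! k \<noteq> ps ! (length ps - 1)" using nth_eq_iff_index_eq[OF ps(4), of k "length ps - 1"] k by (auto; linarith)
        moreover have "ps ! k \<in> X" using setX k by auto
        ultimately have "ps ! k \<in> C" using h0 hl unfolding X_def by auto
        then show "{a, ps!k} \<notin> E" using aC by auto
      qed
      have nc: "\<forall>i j. Suc i < j \<and> j < length ps \<longrightarrow> {ps!i, ps!j} \<notin> E"
      proof (intro allI impI)
        fix i j assume ij: "Suc i < j \<and> j < length ps"
        then have "ps!i \<in> X" "ps!j \<in> X" using setX by auto
        then show "{ps!i, ps!j} \<notin> E" using ps(5) ij unfolding nochord_def by blast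
      qed
      have aps: "a \<notin> set ps" using aX setX by blast
      have ah: "{a, ps!0} \<in> E" using h0 SN[OF s(1)] by simp
      have al: "{a, ps!(length ps - 1)} \<in> E" using hl SN[OF s(2)] by simp
      have aV: "a \<in> V" using ab(1) less(2) by blast
      have wE: "walk (\<lambda>x y. {x,y} \<in> E) ps" by (rule walk_mono[OF ps(1)]) simp
      have "induced_cycle V E (ps @ [a])"
        by (rule cycle_from_path[OF g wE ps(4) nc l3 aps ah al inner sV aV])
      moreover have "length (ps @ [a]) \<ge> 4" using l3 by simp
      ultimately show False using ch unfolding chordal_def by blast
    qed
    define W1 where "W1 = C \<union> S"
    define W2 where "W2 = W - C"
    have W1W: "W1 \<subseteq> W" using CW SN unfolding W1_def by auto
    have aW1: "a \<notin> W1" using aC SN unfolding W1_def by auto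
    have c1: "card W1 < card W" using W1W aW1 ab(1) finW by (metis psubsetI psubset_card_mono)
    have c2: "card W2 < card W" using bC finW ab(2) unfolding W2_def
      by (metis Diff_iff Diff_subset psubsetI psubset_card_mono)
    have h1: "simp_in E W z" if "z \<in> C" "simp_in E W1 z" for z
      using that nbrC unfolding simp_in_def W1_def by blast
    have h2: "simp_in E W z" if "z \<in> W - C - S" "simp_in E W2 z" for z
    proof -
      have "x \<in> W2" if "x \<in> W" "{z,x} \<in> E" for x
      proof -
        have "x \<notin> C" using \<open>z \<in> W - C - S\<close> that unfolding S_def by auto
        then show ?thesis using that unfolding W2_def by simp
      qed
      then show ?thesis using \<open>simp_in E W2 z\<close> unfolding simp_in_def by blast
    qed
    obtain z1 where z1: "z1 \<in> C" "simp_in E W z1"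
    proof -
      from less(1)[OF c1] W1W less(2) consider
        "\<forall>x\<in>W1. \<forall>y\<in>W1. x \<noteq> y \<longrightarrow> {x,y} \<in> E" |
        "\<exists>z1\<in>W1. \<exists>z2\<in>W1. z1 \<noteq> z2 \<and> {z1,z2} \<notin> E \<and> simp_in E W1 z1 \<and> simp_in E W1 z2" by blast
      then show ?thesis
      proof cases
        case 1
        then have "simp_in E W1 b" unfolding simp_in_def by blast
        then show ?thesis using that h1 bC by blast
      next
        case 2
        then obtain p q where pq: "p \<in> W1" "q \<in> W1" "p \<noteq> q" "{p,q} \<notin> E" "simp_in E W1 p" "simp_in E W1 q" by blast
        have "p \<in> C \<or> q \<in> C" using clique pq unfolding W1_def by blast
        then show ?thesis using that h1 pq by blast
      qed
    qed
    obtain z2 where z2: "z2 \<in> W - C - S" "simp_in E W z2"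
    proof -
      have W2V: "W2 \<subseteq> V" using less(2) unfolding W2_def by auto
      from less(1)[OF c2 W2V] consider
        "\<forall>x\<in>W2. \<forall>y\<in>W2. x \<noteq> y \<longrightarrow> {x,y} \<in> E" |
        "\<exists>z1\<in>W2. \<exists>z2\<in>W2. z1 \<noteq> z2 \<and> {z1,z2} \<notin> E \<and> simp_in E W2 z1 \<and> simp_in E W2 z2" by blast
      then show ?thesis
      proof cases
        case 1
        then have "simp_in E W2 a" unfolding simp_in_def by blast
        moreover have "a \<in> W - C - S" using ab aC SN by auto
        ultimately show ?thesis using that h2 by blast
      next
        case 2
        then obtain p q where pq: "p \<in> W2" "q \<in> W2" "p \<noteq> q" "{p,q} \<notin> E" "simp_in E W2 p" "simp_in E W2 q" by blast
        have "p \<notin> S \<or> q \<notin> S" using clique pq by blast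
        then show ?thesis using that h2 pq unfolding W2_def by blast
      qed
    qed
    have "z1 \<noteq> z2" using z1 z2 by auto
    moreover have "{z1,z2} \<notin> E" using z1 z2 unfolding S_def by (auto simp: insert_commute)
    ultimately show ?thesis using z1 z2 CW by blast
  qed
qed



lemma simplicial_exists:
  assumes g: "graph V E" and ch: "chordal V E" and ne: "V \<noteq> {}"
  shows "\<exists>z\<in>V. simp_in E V z"
proof -
  from dirac[OF g ch, of V] consider
    "\<forall>x\<in>V. \<forall>y\<in>V. x \<noteq> y \<longrightarrow> {x,y} \<in> E" |
    "\<exists>z1\<in>V. \<exists>z2\<in>V. z1 \<noteq> z2 \<and> {z1,z2} \<notin> E \<and> simp_in E V z1 \<and> simp_in E V z2" by blast
  then show ?thesis
  proof cases
    case 1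
    obtain z where "z \<in> V" using ne by blast
    moreover have "simp_in E V z" using 1 unfolding simp_in_def by blast
    ultimately show ?thesis by blast
  qed blast
qed

lemma del_graph: "graph V E \<Longrightarrow> graph (V - {z}) {e\<in>E. z \<notin> e}"
  unfolding graph_def by blast

lemma del_chordal:
  assumes ch: "chordal V E" shows "chordal (V - {z}) {e\<in>E. z \<notin> e}"
  unfolding chordal_def
proof
  assume "\<exists>cs. induced_cycle (V - {z}) {e \<in> E. z \<notin> e} cs \<and> 4 \<le> length cs"
  then obtain cs where cs: "induced_cycle (V - {z}) {e \<in> E. z \<notin> e} cs" "4 \<le> length cs" by blast
  have zc: "z \<notin> set cs" using cs(1) unfolding induced_cycle_def by blast
  have "induced_cycle V E cs"
    unfolding induced_cycle_def
  proof (intro conjI allI impI)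
    show "3 \<le> length cs" "distinct cs" "set cs \<subseteq> V" using cs(1) unfolding induced_cycle_def by auto
  next
    fix i j assume ij: "i < length cs" "j < length cs"
    have "cs ! i \<noteq> z" "cs ! j \<noteq> z" using zc ij by (auto simp: in_set_conv_nth)
    then have "{cs ! i, cs ! j} \<in> E \<longleftrightarrow> {cs ! i, cs ! j} \<in> {e \<in> E. z \<notin> e}" by auto
    then show "{cs ! i, cs ! j} \<in> E \<longleftrightarrow> (j = Suc i mod length cs \<or> i = Suc j mod length cs)"
      using cs(1) ij unfolding induced_cycle_def by simp
  qed
  then show False using ch cs(2) unfolding chordal_def by blast
qed

lemma del_K4:
  assumes "\<not> has_K4_minor V E" shows "\<not> has_K4_minor (V - {z}) {e\<in>E. z \<notin> e}"
proof
  assume "has_K4_minor (V - {z}) {e\<in>E. z \<notin> e}"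
  then obtain B :: "nat \<Rightarrow> _" where B: "\<forall>i<4. B i \<subseteq> V - {z} \<and> connected_in {e\<in>E. z \<notin> e} (B i)"
    "\<forall>i<4. \<forall>j<4. i \<noteq> j \<longrightarrow> B i \<inter> B j = {} \<and> (\<exists>x\<in>B i. \<exists>y\<in>B j. {x, y} \<in> {e\<in>E. z \<notin> e})"
    unfolding has_K4_minor_def by blast
  have "connected_in E (B i)" if "i < 4" for i
  proof -
    have "z \<notin> B i" using B(1) that by blast
    moreover have "connected_in {e\<in>E. z \<notin> e} (B i)" using B(1) that by blast
    ultimately show ?thesis using reach_in_cong[of z "B i" E] unfolding connected_in_def by simp
  qed
  then have "has_K4_minor V E" unfolding has_K4_minor_def
    using B by (intro exI[of _ B]) blast
  then show False using assms by simp
qed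

lemma del_biconnected:
  assumes g: "graph V E" and b: "biconnected V E" and zV: "z \<in> V" and sz: "simp_in E V z"
    and c: "card V \<ge> 3"
  shows "biconnected (V - {z}) {e\<in>E. z \<notin> e}"
proof -
  have fin: "finite V" using g unfolding graph_def by simp
  have ne: "V - {z} \<noteq> {}"
  proof
    assume "V - {z} = {}"
    then have "V \<subseteq> {z}" by blast
    then have "card V \<le> 1" using card_mono[OF _ \<open>V \<subseteq> {z}\<close>] by simp
    then show False using c by simp
  qed
  have nc: "\<not> cut_vertex V E w" for w using b unfolding biconnected_def by blast
  have conn: "connected_in {e\<in>E. z \<notin> e} (V - {z})"
    unfolding connected_in_def
  proof (intro conjI ballI)
    show "V - {z} \<noteq> {}" by (rule ne)
    fix u w assume uw: "u \<in> V - {z}" "w \<in> V - {z}"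
    have "reach_in E (V - {z}) u w" using nc[of z] zV uw unfolding cut_vertex_def by blast
    then show "reach_in {e\<in>E. z \<notin> e} (V - {z}) u w" using reach_in_cong[of z "V - {z}" E] by simp
  qed
  have "\<not> cut_vertex (V - {z}) {e\<in>E. z \<notin> e} w" for w
  proof
    assume cv: "cut_vertex (V - {z}) {e\<in>E. z \<notin> e} w"
    then obtain u1 u2 where u: "w \<in> V - {z}" "u1 \<in> V - {z} - {w}" "u2 \<in> V - {z} - {w}"
      "\<not> reach_in {e\<in>E. z \<notin> e} (V - {z} - {w}) u1 u2" unfolding cut_vertex_def by blast
    have "reach_in E (V - {w}) u1 u2" using nc[of w] u unfolding cut_vertex_def by blast
    moreover have "z \<in> V - {w}" using zV u by blast
    moreover have "\<forall>x\<in>V - {w}. \<forall>y\<in>V - {w}. {z,x} \<in> E \<and> {z,y} \<in> E \<and> x \<noteq> y \<longrightarrow> {x,y} \<in> E"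
      using sz unfolding simp_in_def by blast
    ultimately have "reach_in E (V - {w} - {z}) u1 u2"
      using reach_in_remove_simp[of z "V - {w}" E u1 u2] graph_noloop[OF g] u by blast
    moreover have "V - {w} - {z} = V - {z} - {w}" by blast
    ultimately have "reach_in E (V - {z} - {w}) u1 u2" by simp
    then show False using u(4) reach_in_cong[of z "V - {z} - {w}" E] by simp
  qed
  then show ?thesis using conn unfolding biconnected_def by blast
qed

lemma chordal_2tree:
  "graph V E \<Longrightarrow> biconnected V E \<Longrightarrow> \<not> has_K4_minor V E \<Longrightarrow> chordal V E \<Longrightarrow> is_K1 V E \<or> two_tree V E"
proof (induction "card V" arbitrary: V E rule: less_induct)
  case less
  note g = less(2) and b = less(3) and k4 = less(4) and ch = less(5)
  have fin: "finite V" using g unfolding graph_def by simp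
  have ne: "V \<noteq> {}" using b unfolding biconnected_def connected_in_def by simp
  have conn: "\<forall>u\<in>V. \<forall>w\<in>V. reach_in E V u w" using b unfolding biconnected_def connected_in_def by simp
  have nl: "{x} \<notin> E" for x using graph_noloop[OF g] .
  have ge: "x \<in> V \<and> y \<in> V \<and> x \<noteq> y" if "{x,y} \<in> E" for x y using graph_edge[OF g that] .
  have edges: "\<exists>u w. u \<noteq> w \<and> u \<in> V \<and> w \<in> V \<and> e = {u,w}" if "e \<in> E" for e
    using g that unfolding graph_def by blast
  consider "card V = 1" | "card V = 2" | "card V \<ge> 3" using ne fin
    by (metis One_nat_def card_0_eq not_less_eq_eq numeral_2_eq_2 numeral_3_eq_3 le_0_eq le_SucE)
  then show ?case
  proof cases
    case 1
    then obtain v where v: "V = {v}" using card_1_singletonE by blast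
    have "E = {}" using edges v by fastforce
    then show ?thesis using v unfolding is_K1_def by blast
  next
    case 2
    then obtain a b where ab: "V = {a,b}" "a \<noteq> b" by (meson card_2_iff)
    have "reach_in E V a b" using conn ab by simp
    then obtain x where x: "x \<in> V" "{a,x} \<in> E" using reach_in_first ab(2) by metis
    have "x \<noteq> a" using x nl by auto
    then have abE: "{a,b} \<in> E" using x ab by auto
    have "E = {{a,b}}"
    proof
      show "{{a, b}} \<subseteq> E" using abE by simp
      show "E \<subseteq> {{a,b}}"
      proof
        fix e assume "e \<in> E"
        then obtain u w where "u \<noteq> w" "u \<in> V" "w \<in> V" "e = {u,w}" using edges by blast
        then show "e \<in> {{a,b}}" using ab by auto
      qed
    qed
    then show ?thesis using ab two_tree.base by metis
  next
    case 3
    obtain z where zV: "z \<in> V" and sz: "simp_in E V z" using simplicial_exists[OF g ch ne] by blast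
    have c2: "card (V - {z}) \<ge> 2" using 3 zV fin by simp
    obtain w where w: "w \<in> V" "w \<noteq> z"
    proof -
      have "V - {z} \<noteq> {}" using c2 by (metis card.empty not_numeral_le_zero)
      then show ?thesis using that by blast
    qed
    obtain x where x: "x \<in> V" "{z,x} \<in> E" using reach_in_first[of E V z w] conn zV w by metis
    have xz: "x \<noteq> z" using x nl by auto
    obtain y where y: "{z,y} \<in> E" "y \<noteq> x"
    proof (rule ccontr)
      assume "\<not> thesis"
      then have only: "\<And>y. {z,y} \<in> E \<Longrightarrow> y = x" using that by blast
      have "card (V - {x} - {z}) \<ge> 1" using 3 zV x(1) xz fin by simp
      then have "V - {x} - {z} \<noteq> {}" by (intro notI) simp
      then obtain t where t: "t \<in> V" "t \<noteq> x" "t \<noteq> z" by blast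
      have "\<not> reach_in E (V - {x}) z t"
      proof
        assume "reach_in E (V - {x}) z t"
        then obtain u where "u \<in> V - {x}" "{z,u} \<in> E" using reach_in_first t by metis
        then show False using only by auto
      qed
      then have "cut_vertex V E x" unfolding cut_vertex_def using x(1) zV xz t by blast
      then show False using b unfolding biconnected_def by blast
    qed
    have yV: "y \<in> V" and yz: "y \<noteq> z" using ge[OF y(1)] by auto
    have xy: "{x,y} \<in> E" using sz x yV y unfolding simp_in_def by blast
    have Nz: "t = x \<or> t = y" if "{z,t} \<in> E" for t
    proof (rule ccontr)
      assume nt: "\<not> (t = x \<or> t = y)"
      have tV: "t \<in> V" "t \<noteq> z" using ge[OF that] by auto
      have "{x,t} \<in> E" "{y,t} \<in> E" using sz x yV y tV that nt unfolding simp_in_def by blast+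
      moreover have "z \<noteq> x" "z \<noteq> y" "z \<noteq> t" "x \<noteq> t" "y \<noteq> t" using xz yz tV nt by auto
      ultimately have "has_K4_minor V E"
        using K4_of_clique[OF zV x(1) yV tV(1) \<open>z \<noteq> x\<close> \<open>z \<noteq> y\<close> \<open>z \<noteq> t\<close> y(2)[symmetric]
            \<open>x \<noteq> t\<close> \<open>y \<noteq> t\<close> x(2) y(1) that xy] by blast
      then show False using k4 by simp
    qed
    define V' where "V' = V - {z}"
    define E' where "E' = {e\<in>E. z \<notin> e}"
    have IH: "is_K1 V' E' \<or> two_tree V' E'"
    proof (rule less(1))
      show "card V' < card V" unfolding V'_def using zV fin ne by (simp add: card_gt_0_iff)
      show "graph V' E'" unfolding V'_def E'_def by (rule del_graph[OF g])
      show "biconnected V' E'" unfolding V'_def E'_def by (rule del_biconnected[OF g b zV sz 3])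
      show "\<not> has_K4_minor V' E'" unfolding V'_def E'_def by (rule del_K4[OF k4])
      show "chordal V' E'" unfolding V'_def E'_def by (rule del_chordal[OF ch])
    qed
    have "\<not> is_K1 V' E'"
    proof
      assume "is_K1 V' E'"
      then obtain v where "V' = {v}" unfolding is_K1_def by blast
      then show False using c2 unfolding V'_def by simp
    qed
    then have tt: "two_tree V' E'" using IH by blast
    have "{x,y} \<in> E'" using xy xz yz unfolding E'_def by auto
    moreover have "z \<notin> V'" unfolding V'_def by simp
    ultimately have "two_tree (insert z V') (E' \<union> {{z,x},{z,y}})" using two_tree.step[OF tt] by blast
    moreover have "insert z V' = V" using zV unfolding V'_def by blast
    moreover have "E' \<union> {{z,x},{z,y}} = E"
    proof
      show "E' \<union> {{z, x}, {z, y}} \<subseteq> E" using x(2) y(1) unfolding E'_def by blast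
      show "E \<subseteq> E' \<union> {{z, x}, {z, y}}"
      proof
        fix e assume e: "e \<in> E"
        show "e \<in> E' \<union> {{z, x}, {z, y}}"
        proof (cases "z \<in> e")
          case False then show ?thesis using e unfolding E'_def by simp
        next
          case True
          obtain u v where uv: "u \<noteq> v" "e = {u,v}" using edges[OF e] by blast
          have "e = {z,v} \<or> e = {z,u}" using True uv by auto
          then obtain t where et: "e = {z,t}" by blast
          then have "t = x \<or> t = y" using Nz e by blast
          then show ?thesis using et by blast
        qed
      qed
    qed
    ultimately show ?thesis by simp
  qed
qed



lemma opo_edge: "one_perfect_orientation V E D \<Longrightarrow> D x y \<Longrightarrow> {x,y} \<in> E"
  unfolding one_perfect_orientation_def orientation_def by blast

lemma opo_tot: "one_perfect_orientation V E D \<Longrightarrow> {x,y} \<in> E \<Longrightarrow> D x y \<longleftrightarrow> \<not> D y x"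
  unfolding one_perfect_orientation_def orientation_def by blast

lemma opo_clique: "one_perfect_orientation V E D \<Longrightarrow> v \<in> V \<Longrightarrow> D v x \<Longrightarrow> D v y \<Longrightarrow> x \<noteq> y \<Longrightarrow> {x,y} \<in> E"
  unfolding one_perfect_orientation_def by blast

lemma sink_path:
  assumes opo: "one_perfect_orientation V E D" and SV: "S \<subseteq> V"
    and u: "u \<in> S" "\<forall>s\<in>S. \<not> D u s" and w: "w \<in> S" "\<forall>s\<in>S. \<not> D w s" and uw: "u \<noteq> w"
    and r: "reach_in E S u w"
  shows False
proof -
  let ?R = "\<lambda>x y. x \<in> S \<and> y \<in> S \<and> {x,y} \<in> E"
  from shortest_walk[OF r[unfolded reach_in_def]]
  obtain ps where ps: "walk ?R ps" "hd ps = u" "last ps = w" "distinct ps" "nochord ?R ps" by blast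
  have ne: "ps \<noteq> []" using ps(1) by (simp add: walk_def)
  have h0: "ps ! 0 = u" using ps(2) ne by (simp add: hd_conv_nth)
  have hl: "ps ! (length ps - 1) = w" using ps(3) ne by (simp add: last_conv_nth)
  have l2: "2 \<le> length ps"
  proof (rule ccontr)
    assume "\<not> 2 \<le> length ps"
    then have "length ps = 1" using ne by (cases ps) (auto simp: not_le)
    then show False using h0 hl uw by simp
  qed
  have st: "?R (ps ! k) (ps ! Suc k)" if "Suc k < length ps" for k
    using ps(1) that unfolding walk_def by blast
  have dir: "D (ps ! Suc k) (ps ! k)" if "Suc k < length ps" for k
    using that
  proof (induction k)
    case 0
    have "?R (ps!0) (ps!Suc 0)" using st[OF 0] .
    then have "\<not> D (ps!0) (ps!Suc 0)" using u h0 by simp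
    then show ?case using opo_tot[OF opo \<open>?R (ps!0) (ps!Suc 0)\<close>[THEN conjunct2, THEN conjunct2]] by blast
  next
    case (Suc k)
    have prev: "D (ps ! Suc k) (ps ! k)" using Suc by simp
    have e: "?R (ps ! Suc k) (ps ! Suc (Suc k))" using st[OF Suc(2)] .
    have "\<not> D (ps ! Suc k) (ps ! Suc (Suc k))"
    proof
      assume d2: "D (ps ! Suc k) (ps ! Suc (Suc k))"
      have neq: "ps ! k \<noteq> ps ! Suc (Suc k)" using nth_eq_iff_index_eq[OF ps(4), of k "Suc (Suc k)"] Suc(2) by simp
      have "ps ! Suc k \<in> V" using e SV by blast
      then have "{ps ! k, ps ! Suc (Suc k)} \<in> E" using opo_clique[OF opo _ prev d2 neq] by blast
      moreover have "ps ! k \<in> S" using st[of k] Suc(2) by simp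
      ultimately have "?R (ps ! k) (ps ! Suc (Suc k))" using e by blast
      then show False using ps(5) Suc(2) unfolding nochord_def by blast
    qed
    then show ?case using opo_tot[OF opo e[THEN conjunct2, THEN conjunct2]] by blast
  qed
  obtain m where m: "length ps = Suc (Suc m)" using l2 by (metis add_2_eq_Suc le_Suc_ex)
  have "D (ps ! Suc m) (ps ! m)" using dir[of m] m by simp
  moreover have "ps ! Suc m = w" using hl m by simp
  moreover have "ps ! m \<in> S" using st[of m] m by simp
  ultimately show False using w by blast
qed

lemma cyc_closure:
  assumes i0: "i0 < n" "i0 \<in> A" and cl: "\<forall>i<n. i \<in> A \<longrightarrow> Suc i mod n \<in> A"
  shows "\<forall>j<n. j \<in> A"
proof -
  have n0: "0 < n" using i0 by simp
  have all: "(i0 + k) mod n \<in> A" for k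
  proof (induction k)
    case 0 then show ?case using i0 by simp
  next
    case (Suc k)
    have "Suc ((i0 + k) mod n) mod n \<in> A" using cl Suc n0 by simp
    then show ?case by (simp add: mod_Suc_eq)
  qed
  show ?thesis
  proof (intro allI impI)
    fix j assume j: "j < n"
    have "(i0 + (n - i0 + j)) mod n = j" using j i0 by simp
    then show "j \<in> A" using all[of "n - i0 + j"] by simp
  qed
qed

lemma mod_shift_neq:
  fixes i n k :: nat
  assumes "i < n" "0 < k" "k < n" shows "(i + k) mod n \<noteq> i"
proof (cases "i + k < n")
  case True
  then have "(i + k) mod n = i + k" by simp
  then show ?thesis using assms by simp
next
  case False
  then have "(i + k) mod n = i + k - n" using assms by (simp add: mod_if)
  then show ?thesis using assms False by simp
qed

lemma cycle_dir:
  assumes opo: "one_perfect_orientation V E D" and ic: "induced_cycle V E cs" and n4: "length cs \<ge> 4"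
  shows "\<exists>nx. (\<forall>i<length cs. nx i < length cs \<and> D (cs!i) (cs!(nx i))) \<and>
     (\<forall>A. (\<exists>i<length cs. i \<in> A) \<and> (\<forall>i<length cs. i \<in> A \<longrightarrow> nx i \<in> A) \<longrightarrow> (\<forall>i<length cs. i \<in> A))"
proof -
  define n where "n = length cs"
  define s where "s i = Suc i mod n" for i
  have n4': "n \<ge> 4" using n4 unfolding n_def .
  have sl: "s i < n" for i unfolding s_def using n4' by simp
  have ind: "\<And>i j. i < n \<Longrightarrow> j < n \<Longrightarrow> {cs ! i, cs ! j} \<in> E \<longleftrightarrow> (j = s i \<or> i = s j)"
    using ic unfolding induced_cycle_def n_def s_def by blast
  have dist: "distinct cs" and csV: "set cs \<subseteq> V" using ic unfolding induced_cycle_def by auto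
  have edge: "{cs ! i, cs ! s i} \<in> E" if "i < n" for i using ind[OF that sl] by simp
  have s2: "s (s i) = (i + 2) mod n" for i unfolding s_def by (simp add: mod_Suc_eq)
  have s3: "s (s (s i)) = (i + 3) mod n" for i unfolding s_def by (simp add: mod_Suc_eq numeral_3_eq_3)
  have nopeak: False if i: "i < n" and d1: "D (cs ! s i) (cs ! i)" and d2: "D (cs ! s i) (cs ! s (s i))" for i
  proof -
    have "(i + 2) mod n \<noteq> i" using mod_shift_neq[of i n 2] i n4' by simp
    then have "i \<noteq> s (s i)" using s2 by simp
    then have neq: "cs ! i \<noteq> cs ! s (s i)" using nth_eq_iff_index_eq[OF dist, of i "s (s i)"] i sl[of "s i"]
      unfolding n_def by simp
    have "cs ! s i \<in> V" using csV sl unfolding n_def by (simp add: subset_iff)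
    then have "{cs ! i, cs ! s (s i)} \<in> E" using opo_clique[OF opo _ d1 d2 neq] by blast
    then have "s (s i) = s i \<or> i = s (s (s i))" using ind[OF i sl] by simp
    moreover have "s (s i) \<noteq> s i" using mod_shift_neq[of "s i" n 1] sl n4' by (simp add: s_def)
    moreover have "(i + 3) mod n \<noteq> i" using mod_shift_neq[of i n 3] i n4' by simp
    ultimately show False using s3 by metis
  qed
  show ?thesis
  proof (cases "\<forall>i<n. D (cs ! i) (cs ! s i)")
    case True
    show ?thesis
    proof (intro exI[of _ s] conjI)
      show "\<forall>i<length cs. s i < length cs \<and> D (cs ! i) (cs ! s i)" using True sl unfolding n_def by auto
      show "\<forall>A. (\<exists>i<length cs. i \<in> A) \<and> (\<forall>i<length cs. i \<in> A \<longrightarrow> s i \<in> A) \<longrightarrow> (\<forall>i<length cs. i \<in> A)"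
      proof (intro allI impI)
        fix A :: "nat set" and j
        assume a: "(\<exists>i<length cs. i \<in> A) \<and> (\<forall>i<length cs. i \<in> A \<longrightarrow> s i \<in> A)" and j: "j < length cs"
        then obtain i0 where "i0 < n" "i0 \<in> A" unfolding n_def by blast
        from cyc_closure[OF this, of] a j show "j \<in> A" unfolding s_def n_def by blast
      qed
    qed
  next
    case False
    then obtain i0 where i0: "i0 < n" "\<not> D (cs ! i0) (cs ! s i0)" by blast
    have back0: "D (cs ! s i0) (cs ! i0)" using i0 opo_tot[OF opo edge[OF i0(1)]] by blast
    have "\<forall>i<n. i \<in> {i. D (cs ! s i) (cs ! i)}"
    proof (rule cyc_closure)
      show "i0 < n" "i0 \<in> {i. D (cs ! s i) (cs ! i)}" using i0(1) back0 by auto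
      show "\<forall>i<n. i \<in> {i. D (cs ! s i) (cs ! i)} \<longrightarrow> Suc i mod n \<in> {i. D (cs ! s i) (cs ! i)}"
      proof (intro allI impI)
        fix i assume i: "i < n" and d: "i \<in> {i. D (cs ! s i) (cs ! i)}"
        have "\<not> D (cs ! s i) (cs ! s (s i))" using nopeak[OF i] d by blast
        then have "D (cs ! s (s i)) (cs ! s i)" using opo_tot[OF opo edge[OF sl]] by blast
        then show "Suc i mod n \<in> {i. D (cs ! s i) (cs ! i)}" by (simp add: s_def)
      qed
    qed
    then have bk: "\<forall>i<n. D (cs ! s i) (cs ! i)" by simp
    define p where "p i = (if i = 0 then n - 1 else i - 1)" for i
    have sp: "s (p i) = i" if "i < n" for i using that n4' unfolding s_def p_def by auto
    have ps: "p (s j) = j" if "j < n" for j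
    proof (cases "Suc j = n")
      case True then show ?thesis unfolding s_def p_def by simp
    next
      case False then show ?thesis using that unfolding s_def p_def by simp
    qed
    have pl: "p i < n" if "i < n" for i using that n4' unfolding p_def by auto
    show ?thesis
    proof (intro exI[of _ p] conjI)
      show "\<forall>i<length cs. p i < length cs \<and> D (cs ! i) (cs ! p i)"
      proof (intro allI impI conjI)
        fix i assume i: "i < length cs"
        show "p i < length cs" using pl i unfolding n_def by simp
        show "D (cs ! i) (cs ! p i)" using bk[rule_format, OF pl[of i]] sp[of i] i unfolding n_def by simp
      qed
      show "\<forall>A. (\<exists>i<length cs. i \<in> A) \<and> (\<forall>i<length cs. i \<in> A \<longrightarrow> p i \<in> A) \<longrightarrow> (\<forall>i<length cs. i \<in> A)"
      proof (intro allI impI)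
      fix A :: "nat set" and jj
      assume asm: "(\<exists>i<length cs. i \<in> A) \<and> (\<forall>i<length cs. i \<in> A \<longrightarrow> p i \<in> A)" and jj: "jj < length cs"
      show "jj \<in> A"
      proof (rule ccontr)
        assume "jj \<notin> A"
        then obtain j0 where j0: "j0 < n" "j0 \<notin> A" using jj unfolding n_def by blast
        have "\<forall>j<n. j \<in> {j. j \<notin> A}"
        proof (rule cyc_closure[of j0])
          show "j0 < n" "j0 \<in> {j. j \<notin> A}" using j0 by auto
          show "\<forall>i<n. i \<in> {j. j \<notin> A} \<longrightarrow> Suc i mod n \<in> {j. j \<notin> A}"
          proof (intro allI impI)
            fix i assume i: "i < n" "i \<in> {j. j \<notin> A}"
            show "Suc i mod n \<in> {j. j \<notin> A}"
            proof (rule CollectI, rule notI)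
              assume "Suc i mod n \<in> A"
              then have "p (s i) \<in> A" using asm sl unfolding s_def n_def by blast
              then show False using ps[OF i(1)] i(2) by simp
            qed
          qed
        qed
        then show False using asm unfolding n_def by blast
      qed
      qed
    qed
  qed
qed



lemma K4_of_cycle:
  assumes ic: "induced_cycle V E cs" and n4: "length cs \<ge> 4"
    and KV: "K \<subseteq> V - set cs" and Kc: "connected_in E K"
    and att: "\<forall>i<length cs. \<exists>k\<in>K. {k, cs!i} \<in> E"
  shows "has_K4_minor V E"
proof -
  define n where "n = length cs"
  have ind: "\<And>i j. i < n \<Longrightarrow> j < n \<Longrightarrow> {cs ! i, cs ! j} \<in> E \<longleftrightarrow> (j = Suc i mod n \<or> i = Suc j mod n)"
    using ic unfolding induced_cycle_def n_def by blast
  have dist: "distinct cs" and csV: "set cs \<subseteq> V" using ic unfolding induced_cycle_def by auto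
  obtain c0 c1 rest where cs: "cs = c0 # c1 # rest"
  proof -
    have "cs \<noteq> []" using n4 by auto
    then obtain c0 t where t: "cs = c0 # t" by (cases cs) auto
    then have "t \<noteq> []" using n4 by auto
    then obtain c1 rest where "t = c1 # rest" by (cases t) auto
    then show ?thesis using that t by blast
  qed
  have lr: "length rest = n - 2" "length rest \<ge> 2" using cs n4 unfolding n_def by auto
  have n4': "n \<ge> 4" using n4 unfolding n_def .
  have r_nth: "rest ! j = cs ! (j + 2)" for j using cs by simp
  have e01: "{c0, c1} \<in> E" using ind[of 0 1] n4' cs by simp
  have e12: "{c1, rest ! 0} \<in> E" using ind[of 1 2] n4' cs by simp
  have e0l: "{c0, rest ! (n - 3)} \<in> E"
  proof -
    have "{cs ! (n - 1), cs ! 0} \<in> E" using ind[of "n - 1" 0] n4' by simp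
    moreover have "n - 1 = (n - 3) + 2" using n4' by simp
    then have "cs ! (n - 1) = rest ! (n - 3)" using r_nth[of "n - 3"] by simp
    ultimately show ?thesis using cs by (simp add: insert_commute)
  qed
  have restc: "connected_in E (set rest)"
    unfolding connected_in_def
  proof (intro conjI ballI)
    show "set rest \<noteq> {}" using lr by auto
    have step: "{rest ! j, rest ! Suc j} \<in> E" if "Suc j < length rest" for j
    proof -
      have "j + 3 < n" using that lr by simp
      then have "{cs ! (j+2), cs ! (Suc (j+2))} \<in> E" using ind[of "j + 2" "Suc (j + 2)"] by simp
      then show ?thesis using r_nth[of j] r_nth[of "Suc j"] by simp
    qed
    have from0: "reach_in E (set rest) (rest ! 0) (rest ! j)" if "j < length rest" for j
      using that
    proof (induction j)
      case 0 then show ?case by simp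
    next
      case (Suc j)
      have "reach_in E (set rest) (rest ! j) (rest ! Suc j)"
        using step[OF Suc(2)] Suc(2) by (intro reach_in_step) auto
      then show ?case using Suc reach_in_trans by (metis Suc_lessD)
    qed
    fix u w assume "u \<in> set rest" "w \<in> set rest"
    then obtain i j where "i < length rest" "u = rest ! i" "j < length rest" "w = rest ! j"
      by (auto simp: in_set_conv_nth)
    then show "reach_in E (set rest) u w" using from0 reach_in_sym reach_in_trans by metis
  qed
  have att': "\<exists>k\<in>K. {k, cs!i} \<in> E" if "i < n" for i using att that unfolding n_def by blast
  obtain k0 where k0: "k0 \<in> K" "{k0, c0} \<in> E" using att'[of 0] n4' cs by auto
  obtain k1 where k1: "k1 \<in> K" "{k1, c1} \<in> E" using att'[of 1] n4' cs by auto
  obtain k2 where k2: "k2 \<in> K" "{k2, rest ! 0} \<in> E" using att'[of 2] n4' cs by auto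
  have r0: "rest ! 0 \<in> set rest" "rest ! (n - 3) \<in> set rest" using lr by auto
  have d: "c0 \<noteq> c1" "c0 \<notin> set rest" "c1 \<notin> set rest" using dist cs by auto
  have Kd: "K \<inter> set cs = {}" using KV by blast
  define B :: "nat \<Rightarrow> _" where "B i = (if i = 0 then K else if i = 1 then {c0} else if i = 2 then {c1} else set rest)" for i
  have four: "i < 4 \<Longrightarrow> i = 0 \<or> i = 1 \<or> i = 2 \<or> i = 3" for i :: nat by linarith
  have sc: "connected_in E {x}" for x unfolding connected_in_def by simp
  show ?thesis unfolding has_K4_minor_def
  proof (intro exI[of _ B] conjI allI impI)
    fix i :: nat assume "i < 4"
    then show "B i \<subseteq> V" "connected_in E (B i)" using four[of i] KV csV cs Kc restc sc by (auto simp: B_def)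
  next
    fix i j :: nat assume ij: "i < 4" "j < 4" "i \<noteq> j"
    show "B i \<inter> B j = {}" using four[OF ij(1)] four[OF ij(2)] ij(3) d Kd cs by (auto simp: B_def)
    show "\<exists>x\<in>B i. \<exists>y\<in>B j. {x, y} \<in> E"
    proof -
      have sym: "{x,y} \<in> E \<Longrightarrow> {y,x} \<in> E" for x y by (simp add: insert_commute)
      show ?thesis
      using four[OF ij(1)] four[OF ij(2)] ij(3) k0 k1 k2 r0 e01 e12 e0l
        sym[OF k0(2)] sym[OF k1(2)] sym[OF k2(2)] sym[OF e01] sym[OF e12] sym[OF e0l]
      unfolding B_def by auto
    qed
  qed
qed



lemma sink_chordal:
  assumes g: "graph V E" and conn: "connected_in E V" and k4: "\<not> has_K4_minor V E"
    and opo: "one_perfect_orientation V E D" and vV: "v \<in> V" and sk: "sink D v"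
  shows "chordal V E"
proof (rule ccontr)
  assume "\<not> chordal V E"
  then obtain cs where ic: "induced_cycle V E cs" and n4: "length cs \<ge> 4" unfolding chordal_def by blast
  define n where "n = length cs"
  obtain nx where nx: "\<forall>i<n. nx i < n \<and> D (cs!i) (cs!(nx i))"
    and ncl: "\<forall>A. (\<exists>i<n. i \<in> A) \<and> (\<forall>i<n. i \<in> A \<longrightarrow> nx i \<in> A) \<longrightarrow> (\<forall>i<n. i \<in> A)"
    using cycle_dir[OF opo ic n4] unfolding n_def by blast
  have csV: "set cs \<subseteq> V" using ic unfolding induced_cycle_def by blast
  have sk': "\<not> D v x" for x using sk unfolding sink_def by blast
  have vC: "v \<notin> set cs"
  proof
    assume "v \<in> set cs"
    then obtain i where "i < n" "v = cs ! i" unfolding n_def by (auto simp: in_set_conv_nth)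
    then have "D v (cs ! nx i)" using nx by blast
    then show False using sk' by blast
  qed
  define U where "U = V - set cs"
  define K where "K = {x\<in>U. reach_in E U v x}"
  have vK: "v \<in> K" using vV vC unfolding K_def U_def by simp
  have KU: "K \<subseteq> V - set cs" unfolding K_def U_def by blast
  have rK: "reach_in E K v x" if "x \<in> K" for x
    using reach_component[of E U v x] that unfolding K_def by simp
  have Kc: "connected_in E K" unfolding connected_in_def
  proof (intro conjI ballI)
    show "K \<noteq> {}" using vK by blast
    fix x y assume "x \<in> K" "y \<in> K"
    then show "reach_in E K x y" using reach_in_trans[OF reach_in_sym[OF rK] rK] by blast
  qed
  define att where "att i \<longleftrightarrow> (\<exists>k\<in>K. {k, cs!i} \<in> E)" for i
  have c0: "cs ! 0 \<in> set cs" using n4 by (intro nth_mem) (cases cs; auto)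
  have "reach_in E V v (cs ! 0)" using c0 conn vV csV unfolding connected_in_def by blast
  then have "(\<exists>i<n. att i) \<or> (cs ! 0 \<notin> set cs \<and> reach_in E U v (cs ! 0))"
    unfolding reach_in_def[of E V]
  proof (induction rule: rtranclp_induct)
    case base then show ?case using vC by simp
  next
    case (step y t)
    show ?case
    proof (cases "\<exists>i<n. att i")
      case True then show ?thesis by simp
    next
      case False
      then have y: "y \<notin> set cs" "reach_in E U v y" using step(3) by auto
      have yK: "y \<in> K" using y step(2) unfolding K_def U_def by simp
      show ?thesis
      proof (cases "t \<in> set cs")
        case True
        then obtain i where "i < n" "t = cs ! i" unfolding n_def by (auto simp: in_set_conv_nth)
        then have "att i" using yK step(2) unfolding att_def by blast
        then show ?thesis using \<open>i < n\<close> by blast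
      next
        case False
        have "reach_in E U y t" using step(2) y False unfolding U_def by (intro reach_in_step) auto
        then show ?thesis using reach_in_trans[OF y(2)] False by blast
      qed
    qed
  qed
  then have ex_att: "\<exists>i<n. att i" using c0 by blast
  obtain i where i: "i < n" "att i" "\<forall>k\<in>K. \<not> D (cs!i) k"
  proof (rule ccontr)
    assume "\<not> thesis"
    then have out: "\<forall>i<n. att i \<longrightarrow> (\<exists>k\<in>K. D (cs!i) k)" using that by blast
    have A1: "\<exists>i<n. i \<in> {i. att i}" using ex_att by simp
      have A2: "\<forall>i<n. i \<in> {i. att i} \<longrightarrow> nx i \<in> {i. att i}"
      proof (intro allI impI)
        fix j assume j: "j < n" "j \<in> {i. att i}"
        then obtain k where k: "k \<in> K" "D (cs!j) k" using out by blast
        have d2: "D (cs!j) (cs!(nx j))" using nx j by blast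
        have "cs ! nx j \<in> set cs" using nx j unfolding n_def by simp
        then have neq: "k \<noteq> cs ! nx j" using k KU by blast
        have "cs ! j \<in> V" using csV j unfolding n_def by (simp add: subset_iff)
        then have "{k, cs ! nx j} \<in> E" using opo_clique[OF opo _ k(2) d2 neq] by blast
        then show "nx j \<in> {i. att i}" using k unfolding att_def by blast
      qed
    have "\<forall>i<n. i \<in> {i. att i}" using spec[OF ncl, of "{i. att i}"] A1 A2 by blast
    then have "has_K4_minor V E" using K4_of_cycle[OF ic n4 KU Kc] unfolding att_def n_def by simp
    then show False using k4 by simp
  qed
  define c where "c = cs ! i"
  have cC: "c \<in> set cs" "c \<in> V" using i csV unfolding c_def n_def by (auto simp: subset_iff)
  obtain k where k: "k \<in> K" "{k, c} \<in> E" using i unfolding att_def c_def by blast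
  define S where "S = insert c K"
  show False
  proof (rule sink_path[OF opo, of S v c])
    show "S \<subseteq> V" using KU cC unfolding S_def by blast
    show "v \<in> S" using vK unfolding S_def by blast
    show "c \<in> S" unfolding S_def by blast
    show "\<forall>s\<in>S. \<not> D v s" using sk' by blast
    show "\<forall>s\<in>S. \<not> D c s"
    proof
      fix s assume "s \<in> S"
      then consider "s = c" | "s \<in> K" unfolding S_def by blast
      then show "\<not> D c s"
      proof cases
        case 1
        have "{c} \<notin> E" by (rule graph_noloop[OF g])
        then have "\<not> D c c" using opo_edge[OF opo, of c c] by auto
        then show ?thesis using 1 by simp
      next
        case 2 then show ?thesis using i unfolding c_def by blast
      qed
    qed
    show "v \<noteq> c" using vC cC by blast
    have KS: "K \<subseteq> S" unfolding S_def by blast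
    have "reach_in E S v k" by (rule reach_in_mono[OF rK[OF k(1)] KS])
    moreover have "reach_in E S k c" using k unfolding S_def by (intro reach_in_step) auto
    ultimately show "reach_in E S v c" by (rule reach_in_trans)
  qed
qed



lemma tt_graph: "two_tree V E \<Longrightarrow> graph V E \<and> (\<forall>v\<in>V. \<exists>u. {v,u} \<in> E)"
proof (induction rule: two_tree.induct)
  case (base a b)
  have "graph {a,b} {{a,b}}" unfolding graph_def using base by blast
  moreover have "\<forall>v\<in>{a,b}. \<exists>u. {v,u} \<in> {{a,b}}" by (auto simp: insert_commute)
  ultimately show ?case by blast
next
  case (step V E x y z)
  have g: "graph V E" using step by blast
  have xy: "x \<in> V" "y \<in> V" using graph_edge[OF g step(2)] by auto
  have "graph (insert z V) (E \<union> {{z, x}, {z, y}})"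
    unfolding graph_def
  proof (intro conjI ballI)
    show "finite (insert z V)" using g unfolding graph_def by simp
    fix e assume "e \<in> E \<union> {{z, x}, {z, y}}"
    then consider "e \<in> E" | "e = {z,x}" | "e = {z,y}" by blast
    then show "\<exists>u v. u \<noteq> v \<and> u \<in> insert z V \<and> v \<in> insert z V \<and> e = {u, v}"
    proof cases
      case 1 then show ?thesis using g unfolding graph_def by blast
    next
      case 2 then show ?thesis using xy step(3) by (intro exI[of _ z] exI[of _ x]) auto
    next
      case 3 then show ?thesis using xy step(3) by (intro exI[of _ z] exI[of _ y]) auto
    qed
  qed
  moreover have "\<forall>v\<in>insert z V. \<exists>u. {v,u} \<in> E \<union> {{z, x}, {z, y}}" using step by blast
  ultimately show ?case by blast
qed

lemma opo_V: "graph V E \<Longrightarrow> one_perfect_orientation V E D \<Longrightarrow> D u w \<Longrightarrow> u \<in> V \<and> w \<in> V \<and> u \<noteq> w"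
  using opo_edge graph_edge by metis

lemma ext1:
  assumes g: "graph V E" and opo: "one_perfect_orientation V E D" and z: "z \<notin> V" and ab: "{a,b} \<in> E"
  shows "one_perfect_orientation (insert z V) (E \<union> {{z,a},{z,b}}) (\<lambda>u w. D u w \<or> (u = z \<and> (w = a \<or> w = b)))"
proof -
  have V: "u \<in> V \<and> w \<in> V \<and> u \<noteq> w" if "D u w" for u w using opo_V[OF g opo that] .
  have abV: "a \<in> V" "b \<in> V" "a \<noteq> b" using graph_edge[OF g ab] by auto
  have eV: "u \<in> V \<and> w \<in> V" if "{u,w} \<in> E" for u w using graph_edge[OF g that] by auto
  show ?thesis unfolding one_perfect_orientation_def orientation_def
  proof (intro conjI allI impI ballI)
    fix x y assume "D x y \<or> x = z \<and> (y = a \<or> y = b)"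
    then show "{x, y} \<in> E \<union> {{z, a}, {z, b}}" using opo_edge[OF opo] by blast
  next
    fix x y assume e: "{x, y} \<in> E \<union> {{z, a}, {z, b}}"
    show "(D x y \<or> x = z \<and> (y = a \<or> y = b)) = (\<not> (D y x \<or> y = z \<and> (x = a \<or> x = b)))"
    proof (cases "{x,y} \<in> E")
      case True
      then have "x \<noteq> z" "y \<noteq> z" using eV z by auto
      then show ?thesis using opo_tot[OF opo True] by simp
    next
      case False
      then have "{x,y} = {z,a} \<or> {x,y} = {z,b}" using e by blast
      then have "(x = z \<and> (y = a \<or> y = b)) \<or> (y = z \<and> (x = a \<or> x = b))" by (auto simp: doubleton_eq_iff)
      moreover have "\<not> D x z" "\<not> D z x" "\<not> D y z" "\<not> D z y" using V z by blast+
      moreover have "z \<noteq> a" "z \<noteq> b" using abV z by auto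
      ultimately show ?thesis by blast
    qed
  next
    fix v x y assume v: "v \<in> insert z V"
      and d: "(D v x \<or> v = z \<and> (x = a \<or> x = b)) \<and> (D v y \<or> v = z \<and> (y = a \<or> y = b)) \<and> x \<noteq> y"
    show "{x, y} \<in> E \<union> {{z, a}, {z, b}}"
    proof (cases "v = z")
      case True
      then have "\<not> D v x" "\<not> D v y" using V z by blast+
      then have "{x,y} = {a,b}" using d True by auto
      then show ?thesis using ab by simp
    next
      case False
      then have "D v x" "D v y" "v \<in> V" using d v by auto
      then show ?thesis using opo_clique[OF opo] d by blast
    qed
  qed
qed

lemma ext2:
  assumes g: "graph V E" and opo: "one_perfect_orientation V E D" and z: "z \<notin> V" and pq: "{p,q} \<in> E"
    and sp: "\<forall>w. \<not> D p w" and sq: "\<forall>w. D q w \<longleftrightarrow> w = p"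
  shows "one_perfect_orientation (insert z V) (E \<union> {{z,p},{z,q}}) (\<lambda>u w. D u w \<or> (w = z \<and> (u = p \<or> u = q)))"
proof -
  have V: "u \<in> V \<and> w \<in> V \<and> u \<noteq> w" if "D u w" for u w using opo_V[OF g opo that] .
  have pqV: "p \<in> V" "q \<in> V" "p \<noteq> q" using graph_edge[OF g pq] by auto
  have eV: "u \<in> V \<and> w \<in> V" if "{u,w} \<in> E" for u w using graph_edge[OF g that] by auto
  show ?thesis unfolding one_perfect_orientation_def orientation_def
  proof (intro conjI allI impI ballI)
    fix x y assume "D x y \<or> y = z \<and> (x = p \<or> x = q)"
    then show "{x, y} \<in> E \<union> {{z, p}, {z, q}}" using opo_edge[OF opo] by (auto simp: insert_commute)
  next
    fix x y assume e: "{x, y} \<in> E \<union> {{z, p}, {z, q}}"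
    show "(D x y \<or> y = z \<and> (x = p \<or> x = q)) = (\<not> (D y x \<or> x = z \<and> (y = p \<or> y = q)))"
    proof (cases "{x,y} \<in> E")
      case True
      then have "x \<noteq> z" "y \<noteq> z" using eV z by auto
      then show ?thesis using opo_tot[OF opo True] by simp
    next
      case False
      then have "{x,y} = {z,p} \<or> {x,y} = {z,q}" using e by blast
      then have "(x = z \<and> (y = p \<or> y = q)) \<or> (y = z \<and> (x = p \<or> x = q))" by (auto simp: doubleton_eq_iff)
      moreover have "\<not> D x z" "\<not> D z x" "\<not> D y z" "\<not> D z y" using V z by blast+
      moreover have "z \<noteq> p" "z \<noteq> q" using pqV z by auto
      ultimately show ?thesis by blast
    qed
  next
    fix v x y assume v: "v \<in> insert z V"
      and d: "(D v x \<or> x = z \<and> (v = p \<or> v = q)) \<and> (D v y \<or> y = z \<and> (v = p \<or> v = q)) \<and> x \<noteq> y"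
    have nz: "\<not> D v z" using V z by blast
    show "{x, y} \<in> E \<union> {{z, p}, {z, q}}"
    proof (cases "x = z \<or> y = z")
      case False
      then have "D v x" "D v y" using d by auto
      moreover have "v \<in> V" using V \<open>D v x\<close> by blast
      ultimately show ?thesis using opo_clique[OF opo] d by blast
    next
      case True
      then consider "x = z" | "y = z" by blast
      then show ?thesis
      proof cases
        case 1
        then have "y \<noteq> z" "v = p \<or> v = q" using d nz by auto
        then have "D v y" using d by auto
        then have "v = q \<and> y = p" using sp sq \<open>v = p \<or> v = q\<close> by blast
        then show ?thesis using 1 by simp
      next
        case 2
        then have "x \<noteq> z" "v = p \<or> v = q" using d nz by auto
        then have "D v x" using d by auto
        then have "v = q \<and> x = p" using sp sq \<open>v = p \<or> v = q\<close> by blast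
        then show ?thesis using 2 by (simp add: insert_commute)
      qed
    qed
  qed
qed

lemma ext3:
  assumes g: "graph V E" and opo: "one_perfect_orientation V E D" and z: "z \<notin> V" and pq: "{p,q} \<in> E"
    and sp: "\<forall>w. \<not> D p w" and sq: "\<forall>w. D q w \<longleftrightarrow> w = p"
  shows "one_perfect_orientation (insert z V) (E \<union> {{z,p},{z,q}}) (\<lambda>u w. D u w \<or> (u = z \<and> w = p) \<or> (u = q \<and> w = z))"
proof -
  have V: "u \<in> V \<and> w \<in> V \<and> u \<noteq> w" if "D u w" for u w using opo_V[OF g opo that] .
  have pqV: "p \<in> V" "q \<in> V" "p \<noteq> q" using graph_edge[OF g pq] by auto
  have eV: "u \<in> V \<and> w \<in> V" if "{u,w} \<in> E" for u w using graph_edge[OF g that] by auto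
  show ?thesis unfolding one_perfect_orientation_def orientation_def
  proof (intro conjI allI impI ballI)
    fix x y assume "D x y \<or> (x = z \<and> y = p) \<or> (x = q \<and> y = z)"
    then show "{x, y} \<in> E \<union> {{z, p}, {z, q}}" using opo_edge[OF opo] by (auto simp: insert_commute)
  next
    fix x y assume e: "{x, y} \<in> E \<union> {{z, p}, {z, q}}"
    show "(D x y \<or> (x = z \<and> y = p) \<or> (x = q \<and> y = z)) = (\<not> (D y x \<or> (y = z \<and> x = p) \<or> (y = q \<and> x = z)))"
    proof (cases "{x,y} \<in> E")
      case True
      then have "x \<noteq> z" "y \<noteq> z" using eV z by auto
      then show ?thesis using opo_tot[OF opo True] by simp
    next
      case False
      then have "{x,y} = {z,p} \<or> {x,y} = {z,q}" using e by blast
      then have "(x = z \<and> (y = p \<or> y = q)) \<or> (y = z \<and> (x = p \<or> x = q))" by (auto simp: doubleton_eq_iff)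
      moreover have "\<not> D x z" "\<not> D z x" "\<not> D y z" "\<not> D z y" using V z by blast+
      moreover have "z \<noteq> p" "z \<noteq> q" using pqV z by auto
      ultimately show ?thesis using pqV by blast
    qed
  next
    fix v x y assume v: "v \<in> insert z V"
      and d: "(D v x \<or> (v = z \<and> x = p) \<or> (v = q \<and> x = z)) \<and> (D v y \<or> (v = z \<and> y = p) \<or> (v = q \<and> y = z)) \<and> x \<noteq> y"
    show "{x, y} \<in> E \<union> {{z, p}, {z, q}}"
    proof (cases "v = z")
      case True
      then have "\<not> D v x" "\<not> D v y" using V z by blast+
      then show ?thesis using d True pqV z by auto
    next
      case False
      have nz: "\<not> D v z" using V z by blast
      show ?thesis
      proof (cases "v = q")
        case True
        then have "(x = p \<or> x = z) \<and> (y = p \<or> y = z)" using d sq False by auto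
        then have "{x,y} = {z,p}" using d by auto
        then show ?thesis by simp
      next
        case False
        then have "D v x" "D v y" using d \<open>v \<noteq> z\<close> by auto
        moreover have "v \<in> V" using V \<open>D v x\<close> by blast
        ultimately show ?thesis using opo_clique[OF opo] d by blast
      qed
    qed
  qed
qed



lemma step_new:
  assumes g: "graph V E" and z: "z \<notin> V" and pq: "{p,q} \<in> E"
    and ih: "\<exists>D. one_perfect_orientation V E D \<and> sink D p \<and> (\<forall>w. D q w \<longleftrightarrow> w = p)"
    and xy: "{x,y} = {z,p}"
  shows "\<exists>D. one_perfect_orientation (insert z V) (E \<union> {{z,p},{z,q}}) D \<and> sink D x \<and> (\<forall>w. D y w \<longleftrightarrow> w = x)"
proof -
  obtain D where D: "one_perfect_orientation V E D" "sink D p" "\<forall>w. D q w \<longleftrightarrow> w = p" using ih by blast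
  have sp: "\<forall>w. \<not> D p w" using D(2) unfolding sink_def .
  have pqV: "p \<in> V" "q \<in> V" "p \<noteq> q" using graph_edge[OF g pq] by auto
  have nz: "\<not> D z w" for w using opo_V[OF g D(1), of z w] z by blast
  have zpq: "z \<noteq> p" "z \<noteq> q" using pqV z by auto
  from xy consider "x = z" "y = p" | "x = p" "y = z" by (auto simp: doubleton_eq_iff)
  then show ?thesis
  proof cases
    case 1
    show ?thesis
    proof (intro exI conjI)
      show "one_perfect_orientation (insert z V) (E \<union> {{z,p},{z,q}}) (\<lambda>u w. D u w \<or> (w = z \<and> (u = p \<or> u = q)))"
        by (rule ext2[OF g D(1) z pq sp D(3)])
      show "sink (\<lambda>u w. D u w \<or> (w = z \<and> (u = p \<or> u = q))) x" unfolding sink_def using 1 nz zpq by auto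
      show "\<forall>w. (D y w \<or> (w = z \<and> (y = p \<or> y = q))) \<longleftrightarrow> w = x" using 1 sp by auto
    qed
  next
    case 2
    show ?thesis
    proof (intro exI conjI)
      show "one_perfect_orientation (insert z V) (E \<union> {{z,p},{z,q}}) (\<lambda>u w. D u w \<or> (u = z \<and> w = p) \<or> (u = q \<and> w = z))"
        by (rule ext3[OF g D(1) z pq sp D(3)])
      show "sink (\<lambda>u w. D u w \<or> (u = z \<and> w = p) \<or> (u = q \<and> w = z)) x" unfolding sink_def using 2 sp zpq pqV by auto
      show "\<forall>w. (D y w \<or> (y = z \<and> w = p) \<or> (y = q \<and> w = z)) \<longleftrightarrow> w = x" using 2 nz zpq by auto
    qed
  qed
qed

lemma tt_Q: "two_tree V E \<Longrightarrow> \<forall>x y. {x,y} \<in> E \<longrightarrow> (\<exists>D. one_perfect_orientation V E D \<and> sink D x \<and> (\<forall>w. D y w \<longleftrightarrow> w = x))"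
proof (induction rule: two_tree.induct)
  case (base a b)
  show ?case
  proof (intro allI impI)
    fix x y assume "{x,y} \<in> {{a,b}}"
    then have xy: "{x,y} = {a,b}" by simp
    then have xny: "x \<noteq> y" using base by (auto simp: doubleton_eq_iff)
    define D where "D u w \<longleftrightarrow> u = y \<and> w = x" for u w
    have "one_perfect_orientation {a,b} {{a,b}} D"
      unfolding one_perfect_orientation_def orientation_def
    proof (intro conjI allI impI ballI)
      fix u w assume "D u w" then show "{u,w} \<in> {{a,b}}" using xy unfolding D_def by (auto simp: insert_commute)
    next
      fix u w assume "{u,w} \<in> {{a,b}}"
      then have "{u,w} = {x,y}" using xy by simp
      then show "D u w \<longleftrightarrow> \<not> D w u" using xny unfolding D_def by (auto simp: doubleton_eq_iff)
    next
      fix v u w assume "D v u \<and> D v w \<and> u \<noteq> w"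
      then show "{u,w} \<in> {{a,b}}" unfolding D_def by blast
    qed
    moreover have "sink D x" unfolding sink_def D_def using xny by simp
    moreover have "\<forall>w. D y w \<longleftrightarrow> w = x" unfolding D_def by simp
    ultimately show "\<exists>D. one_perfect_orientation {a, b} {{a, b}} D \<and> sink D x \<and> (\<forall>w. D y w \<longleftrightarrow> w = x)" by blast
  qed
next
  case (step V E a b z)
  have g: "graph V E" using tt_graph[OF step(1)] by blast
  show ?case
  proof (intro allI impI)
    fix x y assume e: "{x,y} \<in> E \<union> {{z,a},{z,b}}"
    show "\<exists>D. one_perfect_orientation (insert z V) (E \<union> {{z,a},{z,b}}) D \<and> sink D x \<and> (\<forall>w. D y w \<longleftrightarrow> w = x)"
    proof (cases "{x,y} \<in> E")
      case True
      then obtain D where D: "one_perfect_orientation V E D" "sink D x" "\<forall>w. D y w \<longleftrightarrow> w = x" using step(4) by blast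
      have xyV: "x \<noteq> z" "y \<noteq> z" using graph_edge[OF g True] step(3) by auto
      show ?thesis
      proof (intro exI conjI)
        show "one_perfect_orientation (insert z V) (E \<union> {{z,a},{z,b}}) (\<lambda>u w. D u w \<or> (u = z \<and> (w = a \<or> w = b)))"
          by (rule ext1[OF g D(1) step(3) step(2)])
        show "sink (\<lambda>u w. D u w \<or> (u = z \<and> (w = a \<or> w = b))) x" using D(2) xyV unfolding sink_def by simp
        show "\<forall>w. (D y w \<or> (y = z \<and> (w = a \<or> w = b))) \<longleftrightarrow> w = x" using D(3) xyV by simp
      qed
    next
      case False
      then consider "{x,y} = {z,a}" | "{x,y} = {z,b}" using e by blast
      then show ?thesis
      proof cases
        case 1
        have ih: "\<exists>D. one_perfect_orientation V E D \<and> sink D a \<and> (\<forall>w. D b w \<longleftrightarrow> w = a)" using step(4) step(2) by blast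
        show ?thesis by (rule step_new[OF g step(3) step(2) ih 1])
      next
        case 2
        have ba: "{b,a} \<in> E" using step(2) by (simp add: insert_commute)
        have ih: "\<exists>D. one_perfect_orientation V E D \<and> sink D b \<and> (\<forall>w. D a w \<longleftrightarrow> w = b)" using step(4) ba by blast
        have eq: "E \<union> {{z,a},{z,b}} = E \<union> {{z,b},{z,a}}" by blast
        show ?thesis unfolding eq by (rule step_new[OF g step(3) ba ih 2])
      qed
    qed
  qed
qed

lemma tt_all: "two_tree V E \<Longrightarrow> \<forall>v\<in>V. \<exists>D. one_perfect_orientation V E D \<and> sink D v"
  using tt_Q tt_graph by metis

lemma K1_all: "is_K1 V E \<Longrightarrow> \<forall>v\<in>V. \<exists>D. one_perfect_orientation V E D \<and> sink D v"
proof
  fix v assume "is_K1 V E" "v \<in> V"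
  then have E: "E = {}" unfolding is_K1_def by simp
  have "one_perfect_orientation V E (\<lambda>_ _. False)" unfolding one_perfect_orientation_def orientation_def E by simp
  moreover have "sink (\<lambda>_ _. False) v" unfolding sink_def by simp
  ultimately show "\<exists>D. one_perfect_orientation V E D \<and> sink D v" by blast
qed

theorem lemma5p2:
  fixes V :: "'a set" and E :: "'a set set"
  assumes "graph V E" and "biconnected V E" and "\<not> has_K4_minor V E"
  shows "((\<exists>v\<in>V. \<exists>D. one_perfect_orientation V E D \<and> sink D v)
            \<longleftrightarrow> (\<forall>v\<in>V. \<exists>D. one_perfect_orientation V E D \<and> sink D v))
       \<and> ((\<forall>v\<in>V. \<exists>D. one_perfect_orientation V E D \<and> sink D v) \<longleftrightarrow> chordal V E)
       \<and> (chordal V E \<longleftrightarrow> is_K1 V E \<or> two_tree V E)"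
proof -
  have conn: "connected_in E V" using assms(2) unfolding biconnected_def by blast
  have ne: "V \<noteq> {}" using conn unfolding connected_in_def by blast
  let ?P1 = "\<exists>v\<in>V. \<exists>D. one_perfect_orientation V E D \<and> sink D v"
  let ?P2 = "\<forall>v\<in>V. \<exists>D. one_perfect_orientation V E D \<and> sink D v"
  have 12: "?P1" if "?P2" using that ne by blast
  have 13: "chordal V E" if "?P1" using that sink_chordal[OF assms(1) conn assms(3)] by blast
  have 34: "is_K1 V E \<or> two_tree V E" if "chordal V E" using chordal_2tree[OF assms that] .
  have 42: "?P2" if "is_K1 V E \<or> two_tree V E" using that K1_all tt_all by blast
  show ?thesis using 12 13 34 42 by blast
qed


end
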